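(* In the setting (R), fix $x\in\mathbb{R}^n$ and let $(\lambda_k)_k,(\mu_k)_k\subset(0,+\infty)$ converge to $0$ with $\lim_{k\to\infty}\lambda_k/\mu_k=c\in(0,+\infty)$. Let $u_k=u_{\lambda_k,\mu_k}$ and $p_k=\nabla S_{\lambda_k,\mu_k}(x)$. Then $$\lim_{k\to\infty}u_k=\arg\min_{u\in U(x)}\|u\|_2\qquad\text{and}\qquad\lim_{k\to\infty}p_k=\arg\min_{p\in\partial S(x)}\|p\|_2,$$ i.e. $u_k$ and $p_k$ converge to the Euclidean projections of $0$ onto $U(x)$ and $\partial S(x)$, respectively.
   Context: Setting (R): Let $F_1=\|\cdot\|$ and $F_2=|||\cdot|||$ be two norms on $\mathbb{R}^n$, with dual norms $\|\cdot\|_*$ and $|||\cdot|||_*$, so that $F_2^*(y)=I\{|||y|||_*\le1\}$ (indicator: $0$ if $|||y|||_*\le1$, $+\infty$ otherwise). For $x\in\mathbb{R}^n$ define $S(x)=\min_{u\in\mathbb{R}^n}F_1(u)+F_2^*(x-u)$ and $U(x)=\arg\min_{u\in\mathbb{R}^n}F_1(u)+F_2^*(x-u)$ (a nonempty closed convex set). For $\lambda,\mu>0$, problem (P) is $$\min_{v,w\in\mathbb{R}^n}\ F_1(v)+\frac{\lambda}{2}\|v\|_2^2+F_2^*(w)+\frac{1}{2\mu}\|x-v-w\|_2^2,$$ which has a unique minimizer denoted $(v_{\lambda,\mu},w_{\lambda,\mu})$; its minimal value, as a function of $x$, is denoted $S_{\lambda,\mu}(x)$, which is differentiable in $x$; set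 $u_{\lambda,\mu}=x-w_{\lambda,\mu}$. $\partial$ denotes the convex subdifferential. *)

theory Defs
  imports "HOL-Analysis.Analysis"
begin

definition is_norm :: "('a::real_vector \<Rightarrow> real) \<Rightarrow> bool" where
  "is_norm N \<longleftrightarrow> (\<forall>x. N x = 0 \<longleftrightarrow> x = 0) \<and> (\<forall>c x. N (scaleR c x) = \<bar>c\<bar> * N x)
     \<and> (\<forall>x y. N (x + y) \<le> N x + N y)"

definition dual_norm :: "('a::real_inner \<Rightarrow> real) \<Rightarrow> 'a \<Rightarrow> real" where
  "dual_norm N y = Sup {y \<bullet> u | u. N u \<le> 1}"

text \<open>Fenchel conjugate of a norm: indicator of the dual unit ball.\<close>
definition conj_norm :: "('a::real_inner \<Rightarrow> real) \<Rightarrow> 'a \<Rightarrow> ereal" where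
  "conj_norm N y = (if dual_norm N y \<le> 1 then 0 else \<infinity>)"

definition S_obj :: "('a::real_inner \<Rightarrow> real) \<Rightarrow> ('a \<Rightarrow> real) \<Rightarrow> 'a \<Rightarrow> 'a \<Rightarrow> ereal" where
  "S_obj F1 F2 x u = ereal (F1 u) + conj_norm F2 (x - u)"

definition S_fun :: "('a::real_inner \<Rightarrow> real) \<Rightarrow> ('a \<Rightarrow> real) \<Rightarrow> 'a \<Rightarrow> real" where
  "S_fun F1 F2 x = real_of_ereal (INF u. S_obj F1 F2 x u)"

definition U_set :: "('a::real_inner \<Rightarrow> real) \<Rightarrow> ('a \<Rightarrow> real) \<Rightarrow> 'a \<Rightarrow> 'a set" where
  "U_set F1 F2 x = {u. \<forall>u'. S_obj F1 F2 x u \<le> S_obj F1 F2 x u'}"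

definition P_obj :: "('a::real_inner \<Rightarrow> real) \<Rightarrow> ('a \<Rightarrow> real) \<Rightarrow> real \<Rightarrow> real \<Rightarrow> 'a \<Rightarrow> 'a \<Rightarrow> 'a \<Rightarrow> ereal" where
  "P_obj F1 F2 lam mu x v w =
     ereal (F1 v + lam / 2 * (norm v)\<^sup>2) + conj_norm F2 w + ereal (1 / (2 * mu) * (norm (x - v - w))\<^sup>2)"

definition P_argmin :: "('a::real_inner \<Rightarrow> real) \<Rightarrow> ('a \<Rightarrow> real) \<Rightarrow> real \<Rightarrow> real \<Rightarrow> 'a \<Rightarrow> 'a \<times> 'a" where
  "P_argmin F1 F2 lam mu x = (THE vw. \<forall>v' w'. P_obj F1 F2 lam mu x (fst vw) (snd vw) \<le> P_obj F1 F2 lam mu x v' w')"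

definition u_lm :: "('a::real_inner \<Rightarrow> real) \<Rightarrow> ('a \<Rightarrow> real) \<Rightarrow> real \<Rightarrow> real \<Rightarrow> 'a \<Rightarrow> 'a" where
  "u_lm F1 F2 lam mu x = x - snd (P_argmin F1 F2 lam mu x)"

definition S_lm :: "('a::real_inner \<Rightarrow> real) \<Rightarrow> ('a \<Rightarrow> real) \<Rightarrow> real \<Rightarrow> real \<Rightarrow> 'a \<Rightarrow> real" where
  "S_lm F1 F2 lam mu x = real_of_ereal (INF vw. P_obj F1 F2 lam mu x (fst vw) (snd vw))"

definition gradient :: "('a::real_inner \<Rightarrow> real) \<Rightarrow> 'a \<Rightarrow> 'a" where
  "gradient f x = (THE p. (f has_derivative (\<lambda>h. p \<bullet> h)) (at x))"

definition subdiff :: "('a::real_inner \<Rightarrow> real) \<Rightarrow> 'a \<Rightarrow> 'a set" where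
  "subdiff f x = {p. \<forall>y. f y \<ge> f x + p \<bullet> (y - x)}"

end

theory Submission
  imports Defs
begin


lemma isn_0: "is_norm N \<Longrightarrow> N 0 = 0"
  by (simp add: is_norm_def)
lemma isn_scale: "is_norm N \<Longrightarrow> N (c *\<^sub>R x) = \<bar>c\<bar> * N x"
  by (simp add: is_norm_def)
lemma isn_tri: "is_norm N \<Longrightarrow> N (x + y) \<le> N x + N y"
  by (simp add: is_norm_def)
lemma isn_neg: "is_norm N \<Longrightarrow> N (-x) = N x"
  using isn_scale[of N "-1" x] by simp
lemma isn_nonneg: "is_norm N \<Longrightarrow> 0 \<le> N x"
  using isn_tri[of N x "-x"] isn_neg[of N x] isn_0[of N] by simp
lemma isn_diff: "is_norm N \<Longrightarrow> N x - N y \<le> N (x - y)"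
  using isn_tri[of N "x - y" y] by simp
lemma isn_convex: "is_norm N \<Longrightarrow> 0 \<le> t \<Longrightarrow> t \<le> 1 \<Longrightarrow>
   N ((1-t) *\<^sub>R a + t *\<^sub>R b) \<le> (1-t) * N a + t * N b"
  using isn_tri[of N "(1-t) *\<^sub>R a" "t *\<^sub>R b"] isn_scale[of N "1-t" a] isn_scale[of N t b] by simp
lemma isn_mid: "is_norm N \<Longrightarrow> N ((1/2) *\<^sub>R (a + b)) \<le> (N a + N b)/2"
  using isn_convex[of N "1/2" a b] by (simp add: scaleR_add_right)
lemma isn_sum: assumes "is_norm N" "finite A" shows "N (sum f A) \<le> (\<Sum>i\<in>A. N (f i))"
  using assms(2)
proof (induction A rule: finite_induct)
  case empty then show ?case by (simp add: isn_0[OF assms(1)])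
next
  case (insert a A)
  then show ?case using isn_tri[OF assms(1), of "f a" "sum f A"] by simp
qed

lemma isn_upper:
  fixes N :: "'a::euclidean_space \<Rightarrow> real"
  assumes "is_norm N" shows "\<exists>C>0. \<forall>x. N x \<le> C * norm x"
proof -
  define C where "C = (\<Sum>b\<in>Basis. N b) + 1"
  have Cp: "C > 0" unfolding C_def using isn_nonneg[OF assms] by (simp add: add_nonneg_pos sum_nonneg)
  have "N x \<le> C * norm x" for x
  proof -
    have "N x = N (\<Sum>b\<in>Basis. (x \<bullet> b) *\<^sub>R b)" by (simp add: euclidean_representation)
    also have "\<dots> \<le> (\<Sum>b\<in>Basis. N ((x \<bullet> b) *\<^sub>R b))" by (rule isn_sum[OF assms]) simp
    also have "\<dots> = (\<Sum>b\<in>Basis. \<bar>x \<bullet> b\<bar> * N b)" using isn_scale[OF assms] by simp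
    also have "\<dots> \<le> (\<Sum>b\<in>Basis. norm x * N b)"
      by (rule sum_mono, rule mult_right_mono) (auto simp: Basis_le_norm isn_nonneg[OF assms])
    also have "\<dots> = norm x * (\<Sum>b\<in>Basis. N b)" by (simp add: sum_distrib_left)
    also have "\<dots> \<le> C * norm x" unfolding C_def by (simp add: algebra_simps)
    finally show ?thesis .
  qed
  then show ?thesis using Cp by blast
qed

lemma isn_lip: "is_norm N \<Longrightarrow> \<bar>N x - N y\<bar> \<le> N (x - y)"
  using isn_diff[of N x y] isn_diff[of N y x] isn_neg[of N "x - y"] by (simp add: abs_le_iff)

lemma isn_cont:
  fixes N :: "'a::euclidean_space \<Rightarrow> real"
  assumes "is_norm N" shows "continuous_on S N"
proof -
  obtain C where C: "C > 0" "\<And>x. N x \<le> C * norm x" using isn_upper[OF assms] by blast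
  show ?thesis unfolding continuous_on_iff
  proof (intro ballI allI impI)
    fix x e assume "x \<in> S" "(e::real) > 0"
    show "\<exists>d>0. \<forall>x'\<in>S. dist x' x < d \<longrightarrow> dist (N x') (N x) < e"
    proof (intro exI[of _ "e / C"] conjI ballI impI)
      show "e / C > 0" using C \<open>e>0\<close> by simp
      fix x' assume "dist x' x < e / C"
      then have "C * norm (x' - x) < e" using C by (simp add: dist_norm field_simps)
      then show "dist (N x') (N x) < e" using isn_lip[OF assms, of x' x] C(2)[of "x'-x"]
        by (simp add: dist_real_def)
    qed
  qed
qed

lemma isn_lower:
  fixes N :: "'a::euclidean_space \<Rightarrow> real"
  assumes "is_norm N" shows "\<exists>m>0. \<forall>x. m * norm x \<le> N x"
proof -
  obtain b :: 'a where b: "b \<in> Basis" using nonempty_Basis by blast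
  have ne: "sphere (0::'a) 1 \<noteq> {}" using b by (auto simp: norm_Basis)
  obtain z where z: "z \<in> sphere 0 1" "\<And>y. y \<in> sphere 0 1 \<Longrightarrow> N z \<le> N y"
    using continuous_attains_inf[OF compact_sphere ne isn_cont[OF assms]] by blast
  have "z \<noteq> 0" using z by auto
  then have mp: "N z > 0" using isn_nonneg[OF assms, of z] assms by (auto simp: is_norm_def)
  have "N z * norm x \<le> N x" for x
  proof (cases "x = 0")
    case True then show ?thesis by (simp add: isn_0[OF assms])
  next
    case False
    then have "N z \<le> N ((1 / norm x) *\<^sub>R x)" by (intro z(2)) simp
    also have "\<dots> = N x / norm x" using isn_scale[OF assms] by simp
    finally show ?thesis using False by (simp add: field_simps)
  qed
  then show ?thesis using mp by blast
qed



definition Bd :: "('a::real_inner \<Rightarrow> real) \<Rightarrow> 'a set" where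
  "Bd N = {w. dual_norm N w \<le> 1}"

lemma dual_le1_iff:
  fixes N :: "'a::euclidean_space \<Rightarrow> real"
  assumes "is_norm N" shows "dual_norm N w \<le> 1 \<longleftrightarrow> (\<forall>u. N u \<le> 1 \<longrightarrow> w \<bullet> u \<le> 1)"
proof -
  obtain m where m: "m > 0" "\<And>x. m * norm x \<le> N x" using isn_lower[OF assms] by blast
  have "w \<bullet> 0 \<in> {w \<bullet> u | u. N u \<le> 1}" using isn_0[OF assms] by (auto intro!: exI[of _ 0])
  then have ne: "{w \<bullet> u | u. N u \<le> 1} \<noteq> {}" by blast
  have bdd: "bdd_above {w \<bullet> u | u. N u \<le> 1}"
  proof (rule bdd_aboveI)
    fix z assume "z \<in> {w \<bullet> u | u. N u \<le> 1}"
    then obtain u where u: "z = w \<bullet> u" "N u \<le> 1" by blast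
    have "norm u \<le> 1 / m" using m(2)[of u] u(2) m(1) by (simp add: field_simps)
    then have "z \<le> norm w * (1/m)" using u(1) norm_cauchy_schwarz[of w u]
      by (meson mult_left_mono norm_ge_zero order_trans)
    then show "z \<le> norm w / m" by simp
  qed
  show ?thesis unfolding dual_norm_def using cSup_le_iff[OF ne bdd, of 1] by blast
qed

lemma Bd_iff: "is_norm (N::'a::euclidean_space \<Rightarrow> real) \<Longrightarrow> w \<in> Bd N \<longleftrightarrow> (\<forall>u. N u \<le> 1 \<longrightarrow> w \<bullet> u \<le> 1)"
  unfolding Bd_def using dual_le1_iff by blast

lemma Bd_0: "is_norm (N::'a::euclidean_space \<Rightarrow> real) \<Longrightarrow> 0 \<in> Bd N"
  by (simp add: Bd_iff)

lemma Bd_closed: "is_norm (N::'a::euclidean_space \<Rightarrow> real) \<Longrightarrow> closed (Bd N)"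
proof -
  assume a: "is_norm N"
  have "Bd N = (\<Inter>u\<in>{u. N u \<le> 1}. {w. u \<bullet> w \<le> 1})" using Bd_iff[OF a] by (auto simp: inner_commute)
  then show ?thesis by (auto intro!: closed_INT closed_halfspace_le)
qed

lemma Bd_convex: "is_norm (N::'a::euclidean_space \<Rightarrow> real) \<Longrightarrow> convex (Bd N)"
proof -
  assume a: "is_norm N"
  have "Bd N = (\<Inter>u\<in>{u. N u \<le> 1}. {w. u \<bullet> w \<le> 1})" using Bd_iff[OF a] by (auto simp: inner_commute)
  then show ?thesis by (auto intro!: convex_INT convex_halfspace_le)
qed

lemma Bd_mid: "is_norm (N::'a::euclidean_space \<Rightarrow> real) \<Longrightarrow> a \<in> Bd N \<Longrightarrow> b \<in> Bd N \<Longrightarrow> (1/2) *\<^sub>R (a + b) \<in> Bd N"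
proof -
  assume "is_norm N" "a \<in> Bd N" "b \<in> Bd N"
  then have "(1/2) *\<^sub>R a + (1/2) *\<^sub>R b \<in> Bd N" using Bd_convex[of N] unfolding convex_def by auto
  then show ?thesis by (simp add: scaleR_add_right)
qed

lemma Bd_seg: "is_norm (N::'a::euclidean_space \<Rightarrow> real) \<Longrightarrow> a \<in> Bd N \<Longrightarrow> b \<in> Bd N \<Longrightarrow> 0 \<le> t \<Longrightarrow> t \<le> 1 \<Longrightarrow> a + t *\<^sub>R (b - a) \<in> Bd N"
proof -
  assume "is_norm N" "a \<in> Bd N" "b \<in> Bd N" "0 \<le> t" "t \<le> 1"
  then have "(1-t) *\<^sub>R a + t *\<^sub>R b \<in> Bd N" using Bd_convex[of N] unfolding convex_def by auto
  then show ?thesis by (simp add: algebra_simps)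
qed

lemma Bd_bounded:
  fixes N :: "'a::euclidean_space \<Rightarrow> real"
  assumes "is_norm N" shows "\<exists>C>0. \<forall>w\<in>Bd N. norm w \<le> C"
proof -
  obtain C where C: "C > 0" "\<And>x. N x \<le> C * norm x" using isn_upper[OF assms] by blast
  have "norm w \<le> C" if w: "w \<in> Bd N" for w
  proof (cases "w = 0")
    case True then show ?thesis using C by simp
  next
    case False
    define u where "u = (1 / (C * norm w)) *\<^sub>R w"
    have "N u = N w / (C * norm w)" unfolding u_def using isn_scale[OF assms] C False by simp
    also have "\<dots> \<le> 1" using C(2)[of w] C(1) False by (simp add: field_simps)
    finally have "w \<bullet> u \<le> 1" using w Bd_iff[OF assms] by blast
    moreover have "w \<bullet> u = norm w / C" unfolding u_def using False C(1)
      by (simp add: power2_norm_eq_inner[symmetric] power2_eq_square field_simps)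
    ultimately show ?thesis using C(1) by (simp add: field_simps)
  qed
  then show ?thesis using C(1) by blast
qed

lemma Bd_compact: "is_norm (N::'a::euclidean_space \<Rightarrow> real) \<Longrightarrow> compact (Bd N)"
  using Bd_bounded[of N] Bd_closed[of N] by (metis bounded_iff compact_eq_bounded_closed)

lemma conj_norm_eq: "is_norm (N::'a::euclidean_space \<Rightarrow> real) \<Longrightarrow> conj_norm N w = (if w \<in> Bd N then 0 else \<infinity>)"
  by (simp add: conj_norm_def Bd_def)

lemma subgrad_bound:
  fixes N :: "'a::euclidean_space \<Rightarrow> real"
  assumes "is_norm N" shows "\<exists>C>0. \<forall>v g. (\<forall>h. N (v + h) \<ge> N v + g \<bullet> h) \<longrightarrow> norm g \<le> C"
proof -
  obtain C where C: "C > 0" "\<And>x. N x \<le> C * norm x" using isn_upper[OF assms] by blast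
  have "norm g \<le> C" if g: "\<forall>h. N (v + h) \<ge> N v + g \<bullet> h" for v g
  proof -
    have "N v + g \<bullet> g \<le> N v + N g" using g isn_tri[OF assms, of v g] by (meson order_trans)
    then have "norm g ^ 2 \<le> C * norm g" using C(2)[of g] by (simp add: power2_norm_eq_inner)
    then show ?thesis using C(1) by (cases "norm g = 0") (auto simp: power2_eq_square)
  qed
  then show ?thesis using C(1) by blast
qed

definition Q :: "('a::real_inner \<Rightarrow> real) \<Rightarrow> real \<Rightarrow> real \<Rightarrow> 'a \<Rightarrow> 'a \<Rightarrow> 'a \<Rightarrow> real" where
  "Q F1 lam mu y v w = F1 v + lam / 2 * (norm v)\<^sup>2 + 1 / (2 * mu) * (norm (y - v - w))\<^sup>2"

lemma P_obj_eq: "is_norm (F2::'a::euclidean_space \<Rightarrow> real) \<Longrightarrow>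
   P_obj F1 F2 lam mu y v w = (if w \<in> Bd F2 then ereal (Q F1 lam mu y v w) else \<infinity>)"
  by (simp add: P_obj_def conj_norm_eq Q_def)

lemma parallelogram_half: "(norm ((1/2) *\<^sub>R (a + b)))\<^sup>2 = ((norm a)\<^sup>2 + (norm b)\<^sup>2)/2 - (norm (a - b))\<^sup>2/4"
  for a b :: "'a::real_inner"
  apply (simp add: power2_norm_eq_inner inner_add_left inner_add_right inner_diff_left inner_diff_right
      inner_commute algebra_simps)
  apply (simp add: field_simps) done



lemma Q_min_ex:
  fixes F1 F2 :: "'a::euclidean_space \<Rightarrow> real"
  assumes n1: "is_norm F1" and n2: "is_norm F2" and lam: "lam > 0" and mu: "mu > 0"
  shows "\<exists>v w. w \<in> Bd F2 \<and> (\<forall>v' w'. w' \<in> Bd F2 \<longrightarrow> Q F1 lam mu y v w \<le> Q F1 lam mu y v' w')"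
proof -
  define q0 where "q0 = Q F1 lam mu y 0 0"
  have q0nn: "q0 \<ge> 0" using mu by (simp add: q0_def Q_def isn_0[OF n1])
  define R where "R = sqrt (2 * q0 / lam)"
  have R0: "R \<ge> 0" unfolding R_def using q0nn lam by simp
  have R2: "lam / 2 * R^2 = q0" unfolding R_def using q0nn lam by simp
  define K where "K = cball (0::'a) R \<times> Bd F2"
  have Kc: "compact K" unfolding K_def by (intro compact_Times compact_cball Bd_compact[OF n2])
  have K0: "(0,0) \<in> K" unfolding K_def using R0 Bd_0[OF n2] by simp
  then have Kne: "K \<noteq> {}" by blast
  have c1: "continuous_on K (\<lambda>z. F1 (fst z))"
    by (rule continuous_on_compose2[OF isn_cont[OF n1, of UNIV]]) (auto intro: continuous_intros)
  have cont: "continuous_on K (\<lambda>z. Q F1 lam mu y (fst z) (snd z))"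
    unfolding Q_def by (intro continuous_intros c1)
  obtain z where z: "z \<in> K" "\<And>z'. z' \<in> K \<Longrightarrow> Q F1 lam mu y (fst z) (snd z) \<le> Q F1 lam mu y (fst z') (snd z')"
    using continuous_attains_inf[OF Kc Kne cont] by blast
  have "Q F1 lam mu y (fst z) (snd z) \<le> Q F1 lam mu y v' w'" if w': "w' \<in> Bd F2" for v' w'
  proof (cases "norm v' \<le> R")
    case True then have "(v', w') \<in> K" unfolding K_def using w' by simp
    then show ?thesis using z(2)[of "(v',w')"] by simp
  next
    case False
    have "Q F1 lam mu y (fst z) (snd z) \<le> q0" using z(2)[OF K0] by (simp add: q0_def)
    also have "q0 < lam / 2 * (norm v')^2" unfolding R2[symmetric] using False lam R0
      by (intro mult_strict_left_mono power_strict_mono) auto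
    also have "\<dots> \<le> Q F1 lam mu y v' w'" unfolding Q_def using isn_nonneg[OF n1, of v'] mu by simp
    finally show ?thesis by simp
  qed
  moreover have "snd z \<in> Bd F2" using z(1) unfolding K_def by auto
  ultimately show ?thesis by blast
qed

lemma Q_min_unique:
  fixes F1 F2 :: "'a::euclidean_space \<Rightarrow> real"
  assumes n1: "is_norm F1" and n2: "is_norm F2" and lam: "lam > 0" and mu: "mu > 0"
   and b1: "w1 \<in> Bd F2" and m1: "\<forall>v' w'. w' \<in> Bd F2 \<longrightarrow> Q F1 lam mu y v1 w1 \<le> Q F1 lam mu y v' w'"
   and b2: "w2 \<in> Bd F2" and m2: "\<forall>v' w'. w' \<in> Bd F2 \<longrightarrow> Q F1 lam mu y v2 w2 \<le> Q F1 lam mu y v' w'"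
  shows "v1 = v2 \<and> w1 = w2"
proof -
  define mv where "mv = (1/2) *\<^sub>R (v1 + v2)"
  define mw where "mw = (1/2) *\<^sub>R (w1 + w2)"
  define r1 where "r1 = y - v1 - w1"
  define r2 where "r2 = y - v2 - w2"
  have mwB: "mw \<in> Bd F2" unfolding mw_def using Bd_mid[OF n2 b1 b2] .
  have e1: "Q F1 lam mu y v1 w1 \<le> Q F1 lam mu y mv mw" using m1 mwB by blast
  have e2: "Q F1 lam mu y v1 w1 \<le> Q F1 lam mu y v2 w2" using m1 b2 by blast
  have e3: "Q F1 lam mu y v2 w2 \<le> Q F1 lam mu y v1 w1" using m2 b1 by blast
  have f: "F1 mv \<le> (F1 v1 + F1 v2)/2" unfolding mv_def by (rule isn_mid[OF n1])
  have nv: "(norm mv)^2 = ((norm v1)^2 + (norm v2)^2)/2 - (norm (v1 - v2))^2/4"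
    unfolding mv_def by (rule parallelogram_half)
  have "y - mv - mw = (1/2) *\<^sub>R (r1 + r2)" unfolding mv_def mw_def r1_def r2_def
    by (simp add: algebra_simps) (metis scaleR_add_left field_sum_of_halves scaleR_one)
  then have nr: "(norm (y - mv - mw))^2 = ((norm r1)^2 + (norm r2)^2)/2 - (norm (r1 - r2))^2/4"
    using parallelogram_half[of r1 r2] by metis
  define l where "l = lam / 2"
  define cc where "cc = 1 / (2 * mu)"
  have Qd: "Q F1 lam mu y a b = F1 a + l * (norm a)^2 + cc * (norm (y - a - b))^2" for a b
    unfolding Q_def l_def cc_def by simp
  have "l * ((norm (v1 - v2))^2/4) + cc * ((norm (r1 - r2))^2/4) \<le> 0"
  proof -
    have A: "Q F1 lam mu y v1 w1 \<le> F1 mv + l * (((norm v1)^2 + (norm v2)^2)/2 - (norm (v1 - v2))^2/4)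
       + cc * (((norm r1)^2 + (norm r2)^2)/2 - (norm (r1 - r2))^2/4)"
      using e1 unfolding Qd nv nr .
    have B: "Q F1 lam mu y v1 w1 = F1 v1 + l * (norm v1)^2 + cc * (norm r1)^2" unfolding Qd r1_def ..
    have C: "Q F1 lam mu y v2 w2 = F1 v2 + l * (norm v2)^2 + cc * (norm r2)^2" unfolding Qd r2_def ..
    show ?thesis using A B C e2 e3 f by (simp add: right_diff_distrib distrib_left add_divide_distrib diff_divide_distrib)
  qed
  then have "lam / 2 * ((norm (v1 - v2))^2/4) + 1 / (2 * mu) * ((norm (r1 - r2))^2/4) \<le> 0"
    unfolding l_def cc_def .
  moreover have "lam / 2 * ((norm (v1 - v2))^2/4) \<ge> 0" "1 / (2 * mu) * ((norm (r1 - r2))^2/4) \<ge> 0"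
    using lam mu by auto
  ultimately have "lam / 2 * ((norm (v1 - v2))^2/4) = 0" "1 / (2 * mu) * ((norm (r1 - r2))^2/4) = 0"
    by linarith+
  then have "v1 = v2" "r1 = r2" using lam mu by auto
  then show ?thesis unfolding r1_def r2_def by simp
qed

lemma P_argmin_char:
  fixes F1 F2 :: "'a::euclidean_space \<Rightarrow> real"
  assumes n1: "is_norm F1" and n2: "is_norm F2" and lam: "lam > 0" and mu: "mu > 0"
  shows "snd (P_argmin F1 F2 lam mu y) \<in> Bd F2 \<and>
    (\<forall>v' w'. w' \<in> Bd F2 \<longrightarrow> Q F1 lam mu y (fst (P_argmin F1 F2 lam mu y)) (snd (P_argmin F1 F2 lam mu y)) \<le> Q F1 lam mu y v' w')"
proof -
  obtain v w where vw: "w \<in> Bd F2" "\<forall>v' w'. w' \<in> Bd F2 \<longrightarrow> Q F1 lam mu y v w \<le> Q F1 lam mu y v' w'"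
    using Q_min_ex[OF assms] by blast
  have P: "\<forall>v' w'. P_obj F1 F2 lam mu y v w \<le> P_obj F1 F2 lam mu y v' w'"
    using vw by (simp add: P_obj_eq[OF n2])
  have "P_argmin F1 F2 lam mu y = (v,w)"
    unfolding P_argmin_def
  proof (rule the_equality)
    show "\<forall>v' w'. P_obj F1 F2 lam mu y (fst (v,w)) (snd (v,w)) \<le> P_obj F1 F2 lam mu y v' w'" using P by simp
    fix vw assume h: "\<forall>v' w'. P_obj F1 F2 lam mu y (fst vw) (snd vw) \<le> P_obj F1 F2 lam mu y v' w'"
    then have "P_obj F1 F2 lam mu y (fst vw) (snd vw) \<le> P_obj F1 F2 lam mu y v w" by blast
    then have sb: "snd vw \<in> Bd F2" using vw(1) by (simp add: P_obj_eq[OF n2] split: if_splits)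
    have "\<forall>v' w'. w' \<in> Bd F2 \<longrightarrow> Q F1 lam mu y (fst vw) (snd vw) \<le> Q F1 lam mu y v' w'"
    proof (intro allI impI)
      fix v' w' assume "w' \<in> Bd F2"
      then show "Q F1 lam mu y (fst vw) (snd vw) \<le> Q F1 lam mu y v' w'"
        using h[rule_format, of v' w'] sb by (simp add: P_obj_eq[OF n2])
    qed
    then show "vw = (v,w)" using Q_min_unique[OF assms sb _ vw(1,2)] by (cases vw) auto
  qed
  then show ?thesis using vw by simp
qed

lemma S_lm_eq:
  fixes F1 F2 :: "'a::euclidean_space \<Rightarrow> real"
  assumes n1: "is_norm F1" and n2: "is_norm F2" and lam: "lam > 0" and mu: "mu > 0"
  shows "S_lm F1 F2 lam mu y = Q F1 lam mu y (fst (P_argmin F1 F2 lam mu y)) (snd (P_argmin F1 F2 lam mu y))"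
proof -
  define v where "v = fst (P_argmin F1 F2 lam mu y)"
  define w where "w = snd (P_argmin F1 F2 lam mu y)"
  have ch: "w \<in> Bd F2" "\<forall>v' w'. w' \<in> Bd F2 \<longrightarrow> Q F1 lam mu y v w \<le> Q F1 lam mu y v' w'"
    using P_argmin_char[OF assms, of y] unfolding v_def w_def by auto
  have "(INF vw. P_obj F1 F2 lam mu y (fst vw) (snd vw)) = ereal (Q F1 lam mu y v w)"
  proof (rule antisym)
    show "(INF vw. P_obj F1 F2 lam mu y (fst vw) (snd vw)) \<le> ereal (Q F1 lam mu y v w)"
      using INF_lower[of "(v,w)" UNIV "\<lambda>vw. P_obj F1 F2 lam mu y (fst vw) (snd vw)"] ch(1)
      by (simp add: P_obj_eq[OF n2])
    show "ereal (Q F1 lam mu y v w) \<le> (INF vw. P_obj F1 F2 lam mu y (fst vw) (snd vw))"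
      using ch(2) by (intro INF_greatest) (auto simp: P_obj_eq[OF n2])
  qed
  then show ?thesis unfolding S_lm_def v_def w_def by simp
qed



lemma small_t:
  assumes "\<And>t. 0 < t \<Longrightarrow> t \<le> 1 \<Longrightarrow> 0 \<le> A + t * (K::real)"
  shows "0 \<le> (A::real)"
proof (rule ccontr)
  assume "\<not> 0 \<le> A"
  then have A: "A < 0" by simp
  define t where "t = min 1 (- A / (2 * (\<bar>K\<bar> + 1)))"
  have t0: "0 < t" "t \<le> 1" unfolding t_def using A by (auto simp: field_simps)
  have "t * \<bar>K\<bar> \<le> (- A / (2 * (\<bar>K\<bar> + 1))) * \<bar>K\<bar>" unfolding t_def
    by (intro mult_right_mono) auto
  also have "\<dots> \<le> - A / 2"
    using A by (simp add: field_simps)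
  finally have "t * \<bar>K\<bar> \<le> - A / 2" .
  moreover have "t * K \<le> t * \<bar>K\<bar>" using t0 by (simp add: mult_left_mono)
  ultimately have "t * K < - A" using A by linarith
  then show False using assms[OF t0] by linarith
qed

lemma norm_add_scale_sq: "(norm (a + t *\<^sub>R b))^2 = (norm a)^2 + 2 * t * (a \<bullet> b) + t^2 * (norm b)^2"
  for a b :: "'a::real_inner"
  by (simp only: power2_norm_eq_inner) (simp add: inner_add_left inner_add_right inner_commute algebra_simps power2_eq_square)

context
  fixes F1 F2 :: "'a::euclidean_space \<Rightarrow> real" and lam mu :: real and y :: 'a
  assumes n1: "is_norm F1" and n2: "is_norm F2" and lam: "lam > 0" and mu: "mu > 0"
begin

definition "vv = fst (P_argmin F1 F2 lam mu y)"
definition "ww = snd (P_argmin F1 F2 lam mu y)"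
definition "pp = (1 / mu) *\<^sub>R (y - vv - ww)"

lemma ww_B: "ww \<in> Bd F2" and vw_min: "\<And>v' w'. w' \<in> Bd F2 \<Longrightarrow> Q F1 lam mu y vv ww \<le> Q F1 lam mu y v' w'"
  using P_argmin_char[OF n1 n2 lam mu, of y] unfolding vv_def ww_def by auto

lemma foc1: "F1 vv + (pp - lam *\<^sub>R vv) \<bullet> h \<le> F1 (vv + h)"
proof -
  define r where "r = y - vv - ww"
  define L where "L = lam / 2"
  define c where "c = 1 / (2 * mu)"
  define A where "A = F1 (vv + h) - F1 vv - pp \<bullet> h + 2 * L * (vv \<bullet> h)"
  define K where "K = (L + c) * (norm h)^2"
  have pr: "pp \<bullet> h = 2 * c * (r \<bullet> h)" unfolding pp_def r_def c_def by simp
  have "0 \<le> A + t * K" if t: "0 < t" "t \<le> 1" for t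
  proof -
    have "Q F1 lam mu y vv ww \<le> Q F1 lam mu y (vv + t *\<^sub>R h) ww" using vw_min[OF ww_B] .
    moreover have "F1 (vv + t *\<^sub>R h) \<le> (1 - t) * F1 vv + t * F1 (vv + h)"
      using isn_convex[OF n1, of t vv "vv + h"] t by (simp add: algebra_simps)
    moreover have "y - (vv + t *\<^sub>R h) - ww = r + (-t) *\<^sub>R h" unfolding r_def by (simp add: algebra_simps)
    then have e1: "(norm (y - (vv + t *\<^sub>R h) - ww))^2 = (norm r)^2 + 2 * (-t) * (r \<bullet> h) + (-t)^2 * (norm h)^2"
      by (simp only: norm_add_scale_sq)
    have e2: "(norm (vv + t *\<^sub>R h))^2 = (norm vv)^2 + 2 * t * (vv \<bullet> h) + t^2 * (norm h)^2"
      by (rule norm_add_scale_sq)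
    ultimately have "F1 vv + L * (norm vv)^2 + c * (norm r)^2 \<le>
        (1 - t) * F1 vv + t * F1 (vv + h) + L * ((norm vv)^2 + 2 * t * (vv \<bullet> h) + t^2 * (norm h)^2)
        + c * ((norm r)^2 + 2 * (-t) * (r \<bullet> h) + (-t)^2 * (norm h)^2)"
      unfolding Q_def r_def[symmetric] e1 e2 L_def[symmetric] c_def[symmetric] by simp
    then have "0 \<le> t * (A + t * K)" unfolding A_def K_def pr
      by (simp add: algebra_simps power2_eq_square)
    then show ?thesis using t by (simp add: zero_le_mult_iff)
  qed
  then have "0 \<le> A" by (rule small_t)
  then show ?thesis unfolding A_def L_def by (simp add: inner_diff_left)
qed

lemma foc2: "w' \<in> Bd F2 \<Longrightarrow> pp \<bullet> (w' - ww) \<le> 0"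
proof -
  assume w': "w' \<in> Bd F2"
  define r where "r = y - vv - ww"
  define d where "d = w' - ww"
  have "0 \<le> - 2 * (r \<bullet> d) + t * (norm d)^2" if t: "0 < t" "t \<le> 1" for t
  proof -
    have "ww + t *\<^sub>R (w' - ww) \<in> Bd F2" using Bd_seg[OF n2 ww_B w'] t by simp
    then have "Q F1 lam mu y vv ww \<le> Q F1 lam mu y vv (ww + t *\<^sub>R d)" unfolding d_def using vw_min by blast
    moreover have "y - vv - (ww + t *\<^sub>R d) = r + (-t) *\<^sub>R d" unfolding r_def by (simp add: algebra_simps)
    then have e1: "(norm (y - vv - (ww + t *\<^sub>R d)))^2 = (norm r)^2 + 2 * (-t) * (r \<bullet> d) + (-t)^2 * (norm d)^2"
      by (simp only: norm_add_scale_sq)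
    ultimately have "(norm r)^2 \<le> (norm r)^2 + 2 * (-t) * (r \<bullet> d) + (-t)^2 * (norm d)^2"
      unfolding Q_def r_def[symmetric] e1 using mu by (simp add: field_simps)
    then have "0 \<le> t * (- 2 * (r \<bullet> d) + t * (norm d)^2)" by (simp add: algebra_simps power2_eq_square)
    then show ?thesis using t by (simp add: zero_le_mult_iff)
  qed
  then have "0 \<le> - 2 * (r \<bullet> d)" by (rule small_t)
  then show ?thesis unfolding pp_def r_def[symmetric] d_def[symmetric] using mu
    by (simp add: zero_le_mult_iff mult_le_0_iff divide_nonpos_pos)
qed

lemma vv_bound: "F1 vv \<le> F1 y + lam / 2 * (norm y)^2"
proof -
  have "Q F1 lam mu y vv ww \<le> Q F1 lam mu y y 0" using vw_min[OF Bd_0[OF n2]] .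
  moreover have "F1 vv \<le> Q F1 lam mu y vv ww" unfolding Q_def using lam mu by simp
  ultimately show ?thesis by (simp add: Q_def)
qed

end



lemma lin_aux: "(a::real) \<le> (a1+a2)/2 \<Longrightarrow> b \<le> (b1+b2)/2 \<Longrightarrow> c \<le> (c1+c2)/2 \<Longrightarrow>
   a + b + c \<le> (a1 + b1 + c1 + (a2 + b2 + c2))/2" by (simp add: field_simps)

context
  fixes F1 F2 :: "'a::euclidean_space \<Rightarrow> real" and lam mu :: real
  assumes n1: "is_norm F1" and n2: "is_norm F2" and lam: "lam > 0" and mu: "mu > 0"
begin

lemma S_lm_val: "S_lm F1 F2 lam mu y = Q F1 lam mu y (vv F1 F2 lam mu y) (ww F1 F2 lam mu y)"
  using S_lm_eq[OF n1 n2 lam mu] by (simp add: vv_def[OF n1 n2 lam mu] ww_def[OF n1 n2 lam mu])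

lemma S_lm_le: "w \<in> Bd F2 \<Longrightarrow> S_lm F1 F2 lam mu z \<le> Q F1 lam mu z v w"
  using S_lm_val vw_min[OF n1 n2 lam mu] by simp

lemma S_lm_up: "S_lm F1 F2 lam mu (y + h) \<le> S_lm F1 F2 lam mu y + pp F1 F2 lam mu y \<bullet> h + (norm h)^2 / (2 * mu)"
proof -
  define v where "v = vv F1 F2 lam mu y"
  define w where "w = ww F1 F2 lam mu y"
  define r where "r = y - v - w"
  have "S_lm F1 F2 lam mu (y + h) \<le> Q F1 lam mu (y + h) v w"
    using S_lm_le ww_B[OF n1 n2 lam mu] unfolding w_def by blast
  also have "y + h - v - w = r + 1 *\<^sub>R h" unfolding r_def by (simp add: algebra_simps)
  then have "Q F1 lam mu (y + h) v w = F1 v + lam / 2 * (norm v)^2 + 1 / (2 * mu) * ((norm r)^2 + 2 * 1 * (r \<bullet> h) + 1^2 * (norm h)^2)"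
    unfolding Q_def by (simp only: norm_add_scale_sq)
  also have "\<dots> = S_lm F1 F2 lam mu y + pp F1 F2 lam mu y \<bullet> h + (norm h)^2 / (2 * mu)"
    unfolding S_lm_val Q_def pp_def[OF n1 n2 lam mu] v_def[symmetric] w_def[symmetric] r_def[symmetric]
    using mu by (simp add: field_simps)
  finally show ?thesis .
qed

lemma S_lm_mid: "S_lm F1 F2 lam mu y \<le> (S_lm F1 F2 lam mu (y + h) + S_lm F1 F2 lam mu (y - h)) / 2"
proof -
  define v1 where "v1 = vv F1 F2 lam mu (y + h)"
  define w1 where "w1 = ww F1 F2 lam mu (y + h)"
  define v2 where "v2 = vv F1 F2 lam mu (y - h)"
  define w2 where "w2 = ww F1 F2 lam mu (y - h)"
  define r1 where "r1 = y + h - v1 - w1"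
  define r2 where "r2 = y - h - v2 - w2"
  define mv where "mv = (1/2) *\<^sub>R (v1 + v2)"
  define mw where "mw = (1/2) *\<^sub>R (w1 + w2)"
  have b1: "w1 \<in> Bd F2" "w2 \<in> Bd F2" unfolding w1_def w2_def using ww_B[OF n1 n2 lam mu] by auto
  have mwB: "mw \<in> Bd F2" unfolding mw_def using Bd_mid[OF n2 b1] .
  have f: "F1 mv \<le> (F1 v1 + F1 v2)/2" unfolding mv_def by (rule isn_mid[OF n1])
  have "(norm mv)^2 = ((norm v1)^2 + (norm v2)^2)/2 - (norm (v1 - v2))^2/4"
    unfolding mv_def by (rule parallelogram_half)
  then have nv: "(norm mv)^2 \<le> ((norm v1)^2 + (norm v2)^2)/2"
    using zero_le_power2[of "norm (v1 - v2)"] by linarith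
  have "y - mv - mw = (1/2) *\<^sub>R (r1 + r2)" unfolding mv_def mw_def r1_def r2_def
    by (simp add: algebra_simps) (metis scaleR_add_left field_sum_of_halves scaleR_one)
  then have "(norm (y - mv - mw))^2 = ((norm r1)^2 + (norm r2)^2)/2 - (norm (r1 - r2))^2/4"
    using parallelogram_half[of r1 r2] by metis
  then have nr: "(norm (y - mv - mw))^2 \<le> ((norm r1)^2 + (norm r2)^2)/2"
    using zero_le_power2[of "norm (r1 - r2)"] by linarith
  have "S_lm F1 F2 lam mu y \<le> Q F1 lam mu y mv mw" using S_lm_le[OF mwB] .
  also have "\<dots> \<le> (Q F1 lam mu (y + h) v1 w1 + Q F1 lam mu (y - h) v2 w2) / 2"
  proof -
    have "lam / 2 * (norm mv)^2 \<le> lam / 2 * (((norm v1)^2 + (norm v2)^2)/2)"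
      using nv lam by (intro mult_left_mono) auto
    also have "\<dots> = (lam / 2 * (norm v1)^2 + lam / 2 * (norm v2)^2)/2" by (simp add: algebra_simps)
    finally have A: "lam / 2 * (norm mv)^2 \<le> (lam / 2 * (norm v1)^2 + lam / 2 * (norm v2)^2)/2" .
    have "1 / (2 * mu) * (norm (y - mv - mw))^2 \<le> 1 / (2 * mu) * (((norm r1)^2 + (norm r2)^2)/2)"
      using nr mu by (intro mult_left_mono) auto
    also have "\<dots> = (1 / (2 * mu) * (norm r1)^2 + 1 / (2 * mu) * (norm r2)^2)/2" by (simp add: algebra_simps)
    finally have B: "1 / (2 * mu) * (norm (y - mv - mw))^2 \<le> (1 / (2 * mu) * (norm r1)^2 + 1 / (2 * mu) * (norm r2)^2)/2" .
    show ?thesis unfolding Q_def r1_def[symmetric] r2_def[symmetric]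
      by (rule lin_aux[OF f A B])
  qed
  also have "\<dots> = (S_lm F1 F2 lam mu (y + h) + S_lm F1 F2 lam mu (y - h)) / 2"
    unfolding S_lm_val v1_def w1_def v2_def w2_def ..
  finally show ?thesis .
qed

lemma S_lm_approx: "\<bar>S_lm F1 F2 lam mu (y + h) - S_lm F1 F2 lam mu y - pp F1 F2 lam mu y \<bullet> h\<bar> \<le> (norm h)^2 / (2 * mu)"
proof -
  have "S_lm F1 F2 lam mu (y + -h) \<le> S_lm F1 F2 lam mu y + pp F1 F2 lam mu y \<bullet> (-h) + (norm (-h))^2 / (2 * mu)"
    by (rule S_lm_up)
  then have "S_lm F1 F2 lam mu (y - h) \<le> S_lm F1 F2 lam mu y - pp F1 F2 lam mu y \<bullet> h + (norm h)^2 / (2 * mu)"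
    by simp
  then show ?thesis using S_lm_up[of y h] S_lm_mid[of y h] by (simp add: abs_le_iff)
qed

lemma S_lm_deriv: "(S_lm F1 F2 lam mu has_derivative (\<lambda>h. pp F1 F2 lam mu y \<bullet> h)) (at y)"
  unfolding has_derivative_at_alt
proof (intro conjI allI impI)
  show "bounded_linear (\<lambda>h. pp F1 F2 lam mu y \<bullet> h)" by (rule bounded_linear_inner_right)
  fix e :: real assume e: "e > 0"
  show "\<exists>d>0. \<forall>z. norm (z - y) < d \<longrightarrow>
     norm (S_lm F1 F2 lam mu z - S_lm F1 F2 lam mu y - pp F1 F2 lam mu y \<bullet> (z - y)) \<le> e * norm (z - y)"
  proof (intro exI[of _ "2 * mu * e"] conjI allI impI)
    show "2 * mu * e > 0" using mu e by simp
    fix z assume z: "norm (z - y) < 2 * mu * e"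
    have "\<bar>S_lm F1 F2 lam mu (y + (z - y)) - S_lm F1 F2 lam mu y - pp F1 F2 lam mu y \<bullet> (z - y)\<bar> \<le> (norm (z - y))^2 / (2 * mu)"
      by (rule S_lm_approx)
    also have "\<dots> \<le> e * norm (z - y)"
    proof -
      have "norm (z - y) * norm (z - y) \<le> (2 * mu * e) * norm (z - y)"
        by (rule mult_right_mono) (use z in auto)
      then show ?thesis using mu by (simp add: power2_eq_square field_simps)
    qed
    finally show "norm (S_lm F1 F2 lam mu z - S_lm F1 F2 lam mu y - pp F1 F2 lam mu y \<bullet> (z - y)) \<le> e * norm (z - y)"
      by simp
  qed
qed

lemma gradient_eq: "gradient (S_lm F1 F2 lam mu) y = pp F1 F2 lam mu y"
  unfolding gradient_def
proof (rule the_equality)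
  show "(S_lm F1 F2 lam mu has_derivative (\<lambda>h. pp F1 F2 lam mu y \<bullet> h)) (at y)" by (rule S_lm_deriv)
  fix p assume "(S_lm F1 F2 lam mu has_derivative (\<lambda>h. p \<bullet> h)) (at y)"
  then have "(\<lambda>h. p \<bullet> h) = (\<lambda>h. pp F1 F2 lam mu y \<bullet> h)" using has_derivative_unique S_lm_deriv by blast
  then have "p \<bullet> (p - pp F1 F2 lam mu y) = pp F1 F2 lam mu y \<bullet> (p - pp F1 F2 lam mu y)" by metis
  then have "(p - pp F1 F2 lam mu y) \<bullet> (p - pp F1 F2 lam mu y) = 0" by (simp add: inner_diff_left)
  then show "p = pp F1 F2 lam mu y" by simp
qed

end


lemma ereal_between: "ereal a \<le> X \<Longrightarrow> X \<le> ereal b \<Longrightarrow> a \<le> real_of_ereal X \<and> real_of_ereal X \<le> b"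
  by (cases X) auto

context
  fixes F1 F2 :: "'a::euclidean_space \<Rightarrow> real"
  assumes n1: "is_norm F1" and n2: "is_norm F2"
begin

lemma S_obj_eq: "S_obj F1 F2 x u = (if x - u \<in> Bd F2 then ereal (F1 u) else \<infinity>)"
  by (simp add: S_obj_def conj_norm_eq[OF n2])

lemma S_fun_le: "y - u \<in> Bd F2 \<Longrightarrow> S_fun F1 F2 y \<le> F1 u"
proof -
  assume a: "y - u \<in> Bd F2"
  have "(INF u. S_obj F1 F2 y u) \<le> ereal (F1 u)"
    using INF_lower[of u UNIV "S_obj F1 F2 y"] a by (simp add: S_obj_eq)
  moreover have "ereal 0 \<le> (INF u. S_obj F1 F2 y u)"
    by (rule INF_greatest) (simp add: S_obj_eq isn_nonneg[OF n1])
  ultimately show ?thesis unfolding S_fun_def using ereal_between by blast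
qed

lemma S_fun_ge: "(\<And>u. y - u \<in> Bd F2 \<Longrightarrow> L \<le> F1 u) \<Longrightarrow> L \<le> S_fun F1 F2 y"
proof -
  assume a: "\<And>u. y - u \<in> Bd F2 \<Longrightarrow> L \<le> F1 u"
  have "(INF u. S_obj F1 F2 y u) \<le> ereal (F1 y)"
    using INF_lower[of y UNIV "S_obj F1 F2 y"] Bd_0[OF n2] by (simp add: S_obj_eq)
  moreover have "ereal L \<le> (INF u. S_obj F1 F2 y u)"
    by (rule INF_greatest) (simp add: S_obj_eq a)
  ultimately show ?thesis unfolding S_fun_def using ereal_between by blast
qed

lemma U_char: "u \<in> U_set F1 F2 x \<Longrightarrow> x - u \<in> Bd F2 \<and> (\<forall>u'. x - u' \<in> Bd F2 \<longrightarrow> F1 u \<le> F1 u')"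
proof -
  assume "u \<in> U_set F1 F2 x"
  then have m: "\<And>u'. S_obj F1 F2 x u \<le> S_obj F1 F2 x u'" unfolding U_set_def by blast
  have "S_obj F1 F2 x u \<le> ereal (F1 x)" using m[of x] Bd_0[OF n2] by (simp add: S_obj_eq)
  then have b: "x - u \<in> Bd F2" by (simp add: S_obj_eq split: if_splits)
  have "F1 u \<le> F1 u'" if "x - u' \<in> Bd F2" for u' using m[of u'] b that by (simp add: S_obj_eq)
  then show ?thesis using b by blast
qed

lemma U_intro: "x - u \<in> Bd F2 \<Longrightarrow> (\<And>u'. x - u' \<in> Bd F2 \<Longrightarrow> F1 u \<le> F1 u') \<Longrightarrow> u \<in> U_set F1 F2 x"
  unfolding U_set_def by (auto simp: S_obj_eq)

lemma S_fun_U: "u \<in> U_set F1 F2 x \<Longrightarrow> S_fun F1 F2 x = F1 u"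
  using U_char[of u x] S_fun_le[of x u] S_fun_ge[of x "F1 u"] by force

lemma subdiff_char:
  assumes u: "u \<in> U_set F1 F2 x" and p: "p \<in> subdiff (S_fun F1 F2) x"
  shows "(\<forall>h. F1 u + p \<bullet> h \<le> F1 (u + h)) \<and> (\<forall>w'\<in>Bd F2. p \<bullet> (w' - (x - u)) \<le> 0)"
proof -
  have sx: "S_fun F1 F2 x = F1 u" using S_fun_U[OF u] .
  have xu: "x - u \<in> Bd F2" using U_char[OF u] by blast
  have sd: "\<And>y. S_fun F1 F2 x + p \<bullet> (y - x) \<le> S_fun F1 F2 y" using p unfolding subdiff_def by blast
  have A: "F1 u + p \<bullet> h \<le> F1 (u + h)" for h
  proof -
    have "S_fun F1 F2 (x + h) \<le> F1 (u + h)" using S_fun_le[of "x + h" "u + h"] xu by (simp add: algebra_simps)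
    then show ?thesis using sd[of "x + h"] sx by simp
  qed
  have B: "p \<bullet> (w' - (x - u)) \<le> 0" if w': "w' \<in> Bd F2" for w'
  proof -
    have "S_fun F1 F2 (u + w') \<le> F1 u" using S_fun_le[of "u + w'" u] w' by simp
    then show ?thesis using sd[of "u + w'"] sx by (simp add: algebra_simps)
  qed
  show ?thesis using A B by blast
qed

lemma limit_char:
  assumes sg: "\<And>h. F1 v + p \<bullet> h \<le> F1 (v + h)" and b: "x - v \<in> Bd F2"
    and nc: "\<And>w'. w' \<in> Bd F2 \<Longrightarrow> p \<bullet> (w' - (x - v)) \<le> 0"
  shows "v \<in> U_set F1 F2 x" "p \<in> subdiff (S_fun F1 F2) x"
proof -
  have key: "F1 v + p \<bullet> (y - x) \<le> F1 u'" if "y - u' \<in> Bd F2" for y u'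
  proof -
    have "F1 v + p \<bullet> (u' - v) \<le> F1 u'" using sg[of "u' - v"] by simp
    moreover have "p \<bullet> ((y - u') - (x - v)) \<le> 0" using nc[OF that] .
    ultimately show ?thesis by (simp add: inner_diff_right)
  qed
  show U: "v \<in> U_set F1 F2 x" using key[of x] b by (intro U_intro) auto
  have sx: "S_fun F1 F2 x = F1 v" using S_fun_U[OF U] .
  show "p \<in> subdiff (S_fun F1 F2) x" unfolding subdiff_def
  proof (safe)
    fix y show "S_fun F1 F2 x + p \<bullet> (y - x) \<le> S_fun F1 F2 y"
      unfolding sx by (rule S_fun_ge) (rule key)
  qed
qed

end


lemma subseq_conv:
  fixes z :: "nat \<Rightarrow> 'b::heine_borel"
  assumes bd: "bounded (range z)"
    and sub: "\<And>r l. strict_mono r \<Longrightarrow> (z \<circ> r) \<longlonglongrightarrow> l \<Longrightarrow> l = T"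
  shows "z \<longlonglongrightarrow> T"
proof (rule ccontr)
  assume "\<not> z \<longlonglongrightarrow> T"
  then obtain e where e: "e > 0" "\<forall>N. \<exists>n\<ge>N. \<not> dist (z n) T < e"
    unfolding lim_sequentially by blast
  then have "infinite {n. \<not> dist (z n) T < e}"
    unfolding infinite_nat_iff_unbounded_le by blast
  then obtain r :: "nat \<Rightarrow> nat" where r: "strict_mono r" "\<And>n. \<not> dist (z (r n)) T < e"
    using infinite_enumerate by blast
  have "bounded (range (z \<circ> r))" using bd by (rule bounded_subset) auto
  then obtain l r2 where r2: "strict_mono (r2 :: nat \<Rightarrow> nat)" "((z \<circ> r) \<circ> r2) \<longlonglongrightarrow> l"
    using bounded_imp_convergent_subsequence by blast
  have "strict_mono (r \<circ> r2)" using r(1) r2(1) by (rule strict_mono_o)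
  moreover have "(z \<circ> (r \<circ> r2)) \<longlonglongrightarrow> l" using r2(2) by (simp add: o_assoc)
  ultimately have "l = T" by (rule sub)
  then have "((z \<circ> r) \<circ> r2) \<longlonglongrightarrow> T" using r2(2) by simp
  then obtain N where "\<forall>n\<ge>N. dist (((z \<circ> r) \<circ> r2) n) T < e" using e(1) unfolding lim_sequentially by blast
  then show False using r(2)[of "r2 N"] by auto
qed

lemma closest_point_eq:
  fixes S :: "'b::{real_inner,heine_borel} set"
  assumes a: "a \<in> S" and ob: "\<And>u. u \<in> S \<Longrightarrow> a \<bullet> (a - u) \<le> 0"
  shows "closest_point S 0 = a"
proof -
  have na: "norm a \<le> norm u" if "u \<in> S" for u
  proof -
    have "a \<bullet> a \<le> a \<bullet> u" using ob[OF that] by (simp add: inner_diff_right)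
    also have "\<dots> \<le> norm a * norm u" by (rule norm_cauchy_schwarz)
    finally have "norm a * norm a \<le> norm a * norm u" by (simp add: power2_norm_eq_inner[symmetric] power2_eq_square)
    then show ?thesis by (cases "norm a = 0") (auto simp: mult_le_cancel_left)
  qed
  have ex: "a \<in> S \<and> (\<forall>y\<in>S. dist 0 a \<le> dist 0 y)" using a na by simp
  define c where "c = closest_point S 0"
  have c: "c \<in> S \<and> (\<forall>y\<in>S. dist 0 c \<le> dist 0 y)"
    unfolding c_def closest_point_def by (rule someI[of _ a]) (rule ex)
  then have "norm c \<le> norm a" using a by simp
  moreover have "a \<bullet> (a - c) \<le> 0" using ob c by blast
  ultimately have "(norm (a - c))^2 \<le> 0"
  proof -
    assume "norm c \<le> norm a" "a \<bullet> (a - c) \<le> 0"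
    have "(norm (a - c))^2 = a \<bullet> a - 2 * (a \<bullet> c) + c \<bullet> c"
      by (simp add: power2_norm_eq_inner inner_diff_left inner_diff_right inner_commute)
    also have "\<dots> \<le> c \<bullet> c - a \<bullet> a" using \<open>a \<bullet> (a - c) \<le> 0\<close> by (simp add: inner_diff_right)
    also have "\<dots> \<le> 0" using \<open>norm c \<le> norm a\<close>
      by (simp add: power2_norm_eq_inner[symmetric] power_mono)
    finally show ?thesis .
  qed
  then show ?thesis unfolding c_def[symmetric] by simp
qed



theorem proposition5p4:
  fixes F1 F2 :: "'a::euclidean_space \<Rightarrow> real" and x :: 'a
    and lam mu :: "nat \<Rightarrow> real" and c :: real
  assumes "is_norm F1" and "is_norm F2"
    and "\<And>k. lam k > 0" and "\<And>k. mu k > 0"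
    and "lam \<longlonglongrightarrow> 0" and "mu \<longlonglongrightarrow> 0"
    and "c > 0" and "(\<lambda>k. lam k / mu k) \<longlonglongrightarrow> c"
  shows "(\<lambda>k. u_lm F1 F2 (lam k) (mu k) x) \<longlonglongrightarrow> closest_point (U_set F1 F2 x) 0
       \<and> (\<lambda>k. gradient (S_lm F1 F2 (lam k) (mu k)) x) \<longlonglongrightarrow> closest_point (subdiff (S_fun F1 F2) x) 0"
proof -
  note n1 = assms(1) and n2 = assms(2) and lk = assms(3) and mk = assms(4)
  define v where "v k = vv F1 F2 (lam k) (mu k) x" for k
  define w where "w k = ww F1 F2 (lam k) (mu k) x" for k
  define p where "p k = pp F1 F2 (lam k) (mu k) x" for k
  define U where "U = U_set F1 F2 x"
  define SD where "SD = subdiff (S_fun F1 F2) x"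
  have u_eq: "u_lm F1 F2 (lam k) (mu k) x = x - w k" for k
    unfolding u_lm_def w_def ww_def[OF n1 n2 lk mk] ..
  have g_eq: "gradient (S_lm F1 F2 (lam k) (mu k)) x = p k" for k
    unfolding p_def by (rule gradient_eq[OF n1 n2 lk mk])
  have f1: "F1 (v k) + (p k - lam k *\<^sub>R v k) \<bullet> h \<le> F1 (v k + h)" for k h
    unfolding v_def p_def by (rule foc1[OF n1 n2 lk mk])
  have wB: "w k \<in> Bd F2" for k unfolding w_def by (rule ww_B[OF n1 n2 lk mk])
  have f2: "w' \<in> Bd F2 \<Longrightarrow> p k \<bullet> (w' - w k) \<le> 0" for k w'
    unfolding w_def p_def by (rule foc2[OF n1 n2 lk mk])
  have w_eq: "w k = x - v k - mu k *\<^sub>R p k" for k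
  proof -
    have "mu k *\<^sub>R p k = x - v k - w k" unfolding p_def pp_def[OF n1 n2 lk mk] v_def w_def
      using mk[of k] by simp
    then show ?thesis by (simp add: algebra_simps)
  qed
  have vb: "F1 (v k) \<le> F1 x + lam k / 2 * (norm x)^2" for k
    unfolding v_def by (rule vv_bound[OF n1 n2 lk mk])

  have key: "lam k / mu k * (v k \<bullet> (v k - u)) + p k \<bullet> (p k - q) \<le> 0"
    if u: "u \<in> U" and q: "q \<in> SD" for k u q
  proof -
    have sc: "(\<forall>h. F1 u + q \<bullet> h \<le> F1 (u + h)) \<and> (\<forall>w'\<in>Bd F2. q \<bullet> (w' - (x - u)) \<le> 0)"
      using subdiff_char[OF n1 n2] u q unfolding U_def SD_def by blast
    have xu: "x - u \<in> Bd F2" using U_char[OF n1 n2] u unfolding U_def by blast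
    have I1: "F1 (v k) + (p k - lam k *\<^sub>R v k) \<bullet> (u - v k) \<le> F1 u" using f1[of k "u - v k"] by simp
    have I2: "F1 u + q \<bullet> (v k - u) \<le> F1 (v k)" using sc[THEN conjunct1, rule_format, of "v k - u"] by simp
    have II1: "p k \<bullet> ((x - u) - w k) \<le> 0" using f2[OF xu] .
    have II2: "q \<bullet> (w k - (x - u)) \<le> 0" using sc wB by blast
    have d: "(x - u) - w k = (v k - u) + mu k *\<^sub>R p k" unfolding w_eq by (simp add: algebra_simps)
    define A where "A = p k \<bullet> (v k - u)"
    define B where "B = v k \<bullet> (v k - u)"
    define C where "C = q \<bullet> (v k - u)"
    define D where "D = p k \<bullet> (p k - q)"
    have I1': "lam k * B \<le> A - C" using I1 I2 
      by (simp add: A_def B_def C_def inner_diff_left inner_diff_right algebra_simps)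
    have II: "A - C + mu k * D \<le> 0"
    proof -
      have "p k \<bullet> ((x - u) - w k) = A + mu k * (p k \<bullet> p k)" unfolding d A_def by (simp add: inner_add_right)
      moreover have "q \<bullet> (w k - (x - u)) = - C - mu k * (q \<bullet> p k)"
      proof -
        have e: "q \<bullet> (w k - (x - u)) = - (q \<bullet> ((x - u) - w k))" by (simp add: inner_diff_right)
        show ?thesis unfolding e d C_def by (simp add: inner_add_right)
      qed
      ultimately show ?thesis using II1 II2 unfolding D_def by (simp add: inner_diff_right inner_commute algebra_simps)
    qed
    have "lam k * B + mu k * D \<le> 0" using I1' II by linarith
    then have "(lam k * B + mu k * D) / mu k \<le> 0" using mk[of k] by (simp add: divide_nonpos_pos)
    then show ?thesis unfolding B_def D_def using mk[of k] by (simp add: field_simps)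
  qed

  obtain m where m: "m > 0" "\<And>y. m * norm y \<le> F1 y" using isn_lower[OF n1] by blast
  have "bounded (range lam)" using assms(5) by (rule convergent_imp_bounded)
  then obtain La where La: "\<And>k. norm (lam k) \<le> La" unfolding bounded_iff by blast
  define V where "V = (F1 x + La / 2 * (norm x)^2) / m"
  have vbd: "norm (v k) \<le> V" for k
  proof -
    have "lam k / 2 * (norm x)^2 \<le> La / 2 * (norm x)^2"
      using La[of k] by (intro mult_right_mono) auto
    then have "m * norm (v k) \<le> F1 x + La / 2 * (norm x)^2" using m(2)[of "v k"] vb[of k] by linarith
    then show ?thesis unfolding V_def using m(1) by (simp add: field_simps)
  qed
  obtain Cg where Cg: "\<And>v0 g. (\<forall>h. F1 (v0 + h) \<ge> F1 v0 + g \<bullet> h) \<Longrightarrow> norm g \<le> Cg"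
    using subgrad_bound[OF n1] by blast
  have pbd: "norm (p k) \<le> Cg + La * V" for k
  proof -
    have g: "norm (p k - lam k *\<^sub>R v k) \<le> Cg" using f1[of k] by (intro Cg) auto
    have "norm (lam k *\<^sub>R v k) \<le> La * V" using La[of k] vbd[of k]
      by (simp add: mult_mono')
    moreover have "norm (p k) \<le> norm (p k - lam k *\<^sub>R v k) + norm (lam k *\<^sub>R v k)"
      using norm_triangle_ineq[of "p k - lam k *\<^sub>R v k" "lam k *\<^sub>R v k"] by simp
    ultimately show ?thesis using g by linarith
  qed
  define z where "z k = (v k, p k)" for k
  have zb: "bounded (range z)"
  proof -
    have "range z \<subseteq> cball 0 V \<times> cball 0 (Cg + La * V)" unfolding z_def using vbd pbd by auto
    then show ?thesis by (rule bounded_subset[rotated]) (intro bounded_Times bounded_cball)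
  qed

  have F1c: "(\<lambda>k. F1 (X k)) \<longlonglongrightarrow> F1 l" if "X \<longlonglongrightarrow> l" for X l
    using continuous_on_tendsto_compose[OF isn_cont[OF n1, of UNIV] that] by simp
  define T where "T = (closest_point U 0, closest_point SD 0)"
  have sub: "l = T" if r: "strict_mono r" and zr: "(z \<circ> r) \<longlonglongrightarrow> l" for r l
  proof -
    obtain a b where l: "l = (a, b)" by (cases l)
    have va: "(\<lambda>k. v (r k)) \<longlonglongrightarrow> a" using tendsto_fst[OF zr] unfolding l z_def by (simp add: o_def)
    have pb: "(\<lambda>k. p (r k)) \<longlonglongrightarrow> b" using tendsto_snd[OF zr] unfolding l z_def by (simp add: o_def)
    have lr: "(\<lambda>k. lam (r k)) \<longlonglongrightarrow> 0" using LIMSEQ_subseq_LIMSEQ[OF assms(5) r] by (simp add: o_def)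
    have mr: "(\<lambda>k. mu (r k)) \<longlonglongrightarrow> 0" using LIMSEQ_subseq_LIMSEQ[OF assms(6) r] by (simp add: o_def)
    have cr: "(\<lambda>k. lam (r k) / mu (r k)) \<longlonglongrightarrow> c" using LIMSEQ_subseq_LIMSEQ[OF assms(8) r] by (simp add: o_def)
    have wr: "(\<lambda>k. w (r k)) \<longlonglongrightarrow> x - a - 0 *\<^sub>R b" unfolding w_eq
      by (intro tendsto_intros va pb mr)
    have i: "F1 a + b \<bullet> h \<le> F1 (a + h)" for h
    proof -
      have "(\<lambda>k. F1 (v (r k)) + (p (r k) - lam (r k) *\<^sub>R v (r k)) \<bullet> h) \<longlonglongrightarrow> F1 a + (b - 0 *\<^sub>R a) \<bullet> h"
        by (intro tendsto_intros F1c va pb lr)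
      moreover have "(\<lambda>k. F1 (v (r k) + h)) \<longlonglongrightarrow> F1 (a + h)" by (intro F1c tendsto_intros va)
      ultimately have "F1 a + (b - 0 *\<^sub>R a) \<bullet> h \<le> F1 (a + h)"
        by (rule LIMSEQ_le) (use f1 in auto)
      then show ?thesis by simp
    qed
    have ii: "x - a \<in> Bd F2"
      using Lim_in_closed_set[OF Bd_closed[OF n2] _ _ wr] wB by simp
    have iii: "b \<bullet> (w' - (x - a)) \<le> 0" if w': "w' \<in> Bd F2" for w'
    proof -
      have "(\<lambda>k. p (r k) \<bullet> (w' - w (r k))) \<longlonglongrightarrow> b \<bullet> (w' - (x - a - 0 *\<^sub>R b))"
        by (intro tendsto_intros pb wr)
      then have "b \<bullet> (w' - (x - a - 0 *\<^sub>R b)) \<le> 0"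
        by (rule LIMSEQ_le_const2) (use f2[OF w'] in auto)
      then show ?thesis by simp
    qed
    have aU: "a \<in> U" and bS: "b \<in> SD"
      using limit_char[OF n1 n2 i ii iii] unfolding U_def SD_def by auto
    have iv: "c * (a \<bullet> (a - u)) + b \<bullet> (b - q) \<le> 0" if u: "u \<in> U" and q: "q \<in> SD" for u q
    proof -
      have "(\<lambda>k. lam (r k) / mu (r k) * (v (r k) \<bullet> (v (r k) - u)) + p (r k) \<bullet> (p (r k) - q))
          \<longlonglongrightarrow> c * (a \<bullet> (a - u)) + b \<bullet> (b - q)"
        by (intro tendsto_intros cr va pb)
      then show ?thesis by (rule LIMSEQ_le_const2) (use key[OF u q] in auto)
    qed
    have "closest_point U 0 = a"
    proof (rule closest_point_eq[OF aU])
      fix u assume "u \<in> U"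
      then have "c * (a \<bullet> (a - u)) \<le> 0" using iv[OF _ bS] by simp
      then show "a \<bullet> (a - u) \<le> 0" using assms(7) by (simp add: mult_le_0_iff)
    qed
    moreover have "closest_point SD 0 = b"
    proof (rule closest_point_eq[OF bS])
      fix q assume "q \<in> SD"
      then show "b \<bullet> (b - q) \<le> 0" using iv[OF aU] by simp
    qed
    ultimately show ?thesis unfolding T_def l by simp
  qed
  have zT: "z \<longlonglongrightarrow> T" by (rule subseq_conv[OF zb sub])
  have vT: "v \<longlonglongrightarrow> closest_point U 0" using tendsto_fst[OF zT] unfolding z_def T_def by simp
  have pT: "p \<longlonglongrightarrow> closest_point SD 0" using tendsto_snd[OF zT] unfolding z_def T_def by simp
  have "(\<lambda>k. v k + mu k *\<^sub>R p k) \<longlonglongrightarrow> closest_point U 0 + 0 *\<^sub>R closest_point SD 0"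
    by (intro tendsto_intros vT pT assms(6))
  moreover have "x - w k = v k + mu k *\<^sub>R p k" for k unfolding w_eq by (simp add: algebra_simps)
  ultimately have "(\<lambda>k. x - w k) \<longlonglongrightarrow> closest_point U 0 + 0 *\<^sub>R closest_point SD 0" by simp
  then have "(\<lambda>k. u_lm F1 F2 (lam k) (mu k) x) \<longlonglongrightarrow> closest_point U 0" unfolding u_eq by simp
  moreover have "(\<lambda>k. gradient (S_lm F1 F2 (lam k) (mu k)) x) \<longlonglongrightarrow> closest_point SD 0"
    unfolding g_eq using pT .
  ultimately show ?thesis unfolding U_def SD_def by blast
qed

end
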